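(* The space $L(\omega_1)$ is totally Lindelöf.
   Context: $L(\omega_1)$ is the set $\omega_1+1$ with the topology in which every $\alpha<\omega_1$ is isolated and the sets $]\alpha,\omega_1]=\{\gamma:\alpha<\gamma\le\omega_1\}$, $\alpha<\omega_1$, form a local base at $\omega_1$. A filter base on $X$ is a nonempty $\mathcal{F}\subseteq\mathcal{P}(X)$ with $\emptyset\notin\mathcal{F}$ and closed under pairwise intersections; it is stable under countable intersections if for every countable $S\subseteq\mathcal{F}$ there is $H\in\mathcal{F}$ with $H\subseteq\bigcap S$. $ad(\mathcal{F})=\bigcap\{\overline{F}:F\in\mathcal{F}\}$. A filter base $\mathcal{F}$ is total if every filter base $\mathcal{H}\supseteq\mathcal{F}$ satisfies $ad(\mathcal{H})\neq\emptyset$. $X$ is totally Lindelöf if every filter base on $X$ stable under countable intersections is contained in a total filter base on $X$ stable under countable intersections. *)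

theory Defs
  imports "HOL-Analysis.Analysis"
begin

definition filter_base :: "'a set \<Rightarrow> 'a set set \<Rightarrow> bool" where
  "filter_base X \<F> \<longleftrightarrow> \<F> \<noteq> {} \<and> \<F> \<subseteq> Pow X \<and> {} \<notin> \<F> \<and>
     (\<forall>A\<in>\<F>. \<forall>B\<in>\<F>. A \<inter> B \<in> \<F>)"

definition stable_countable_inter :: "'a set set \<Rightarrow> bool" where
  "stable_countable_inter \<F> \<longleftrightarrow>
     (\<forall>S. S \<subseteq> \<F> \<and> countable S \<longrightarrow> (\<exists>H\<in>\<F>. H \<subseteq> \<Inter>S))"

definition adherence :: "'a topology \<Rightarrow> 'a set set \<Rightarrow> 'a set" where
  "adherence T \<F> = (\<Inter>F\<in>\<F>. T closure_of F)"

definition total_filter_base :: "'a topology \<Rightarrow> 'a set set \<Rightarrow> bool" where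
  "total_filter_base T \<F> \<longleftrightarrow> filter_base (topspace T) \<F> \<and>
     (\<forall>\<H>. filter_base (topspace T) \<H> \<and> \<F> \<subseteq> \<H> \<longrightarrow> adherence T \<H> \<noteq> {})"

definition totally_lindelof :: "'a topology \<Rightarrow> bool" where
  "totally_lindelof T \<longleftrightarrow>
     (\<forall>\<F>. filter_base (topspace T) \<F> \<and> stable_countable_inter \<F> \<longrightarrow>
        (\<exists>\<G>. \<F> \<subseteq> \<G> \<and> filter_base (topspace T) \<G> \<and> stable_countable_inter \<G> \<and>
             total_filter_base T \<G>))"

text \<open>The ordinal omega_1 is represented by a well-ordered type 'a of order
type omega_1 (uncountable, every proper initial segment countable); omega_1 + 1 is
'a option, with Some alpha the countable ordinal alpha and None the point omega_1.
Every Some alpha is isolated; the sets ]alpha, omega_1] form a local base at None.\<close>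
definition L_omega1 :: "('a::wellorder) option topology" where
  "L_omega1 = topology (\<lambda>U. None \<in> U \<longrightarrow> (\<exists>\<alpha>. \<forall>\<gamma>. \<alpha> < \<gamma> \<longrightarrow> Some \<gamma> \<in> U))"

end

theory Submission
  imports Defs
begin

lemma L_istop: "istopology (\<lambda>U::('a::wellorder) option set. None \<in> U \<longrightarrow> (\<exists>\<alpha>. \<forall>\<gamma>. \<alpha> < \<gamma> \<longrightarrow> Some \<gamma> \<in> U))"
  unfolding istopology_def
proof (intro conjI allI impI)
  fix S T :: "'a option set"
  assume a1: "None \<in> S \<longrightarrow> (\<exists>\<alpha>. \<forall>\<gamma>. \<alpha> < \<gamma> \<longrightarrow> Some \<gamma> \<in> S)"
    and a2: "None \<in> T \<longrightarrow> (\<exists>\<alpha>. \<forall>\<gamma>. \<alpha> < \<gamma> \<longrightarrow> Some \<gamma> \<in> T)"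
  assume "None \<in> S \<inter> T"
  with a1 a2 obtain b1 b2 where "\<forall>\<gamma>. b1 < \<gamma> \<longrightarrow> Some \<gamma> \<in> S" "\<forall>\<gamma>. b2 < \<gamma> \<longrightarrow> Some \<gamma> \<in> T" by auto
  then show "\<exists>\<alpha>. \<forall>\<gamma>. \<alpha> < \<gamma> \<longrightarrow> Some \<gamma> \<in> S \<inter> T"
    by (intro exI[of _ "max b1 b2"]) auto
next
  fix K :: "'a option set set"
  assume "\<forall>S\<in>K. None \<in> S \<longrightarrow> (\<exists>\<alpha>. \<forall>\<gamma>. \<alpha> < \<gamma> \<longrightarrow> Some \<gamma> \<in> S)"
  moreover assume "None \<in> \<Union>K"
  ultimately show "\<exists>\<alpha>. \<forall>\<gamma>. \<alpha> < \<gamma> \<longrightarrow> Some \<gamma> \<in> \<Union>K" by blast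
qed

lemma L_open: "openin (L_omega1::('a::wellorder) option topology) U \<longleftrightarrow> (None \<in> U \<longrightarrow> (\<exists>\<alpha>. \<forall>\<gamma>. \<alpha> < \<gamma> \<longrightarrow> Some \<gamma> \<in> U))"
  unfolding L_omega1_def topology_inverse'[OF L_istop] by simp

lemma L_top: "topspace (L_omega1::('a::wellorder) option topology) = UNIV"
  unfolding topspace_def L_open by auto

lemma bound_countable:
  assumes "uncountable (UNIV :: ('a::wellorder) set)"
    and "\<And>\<alpha>::'a. countable {\<beta>. \<beta> < \<alpha>}"
    and "countable (S::'a set)"
  shows "\<exists>b. \<forall>s\<in>S. s \<le> b"
proof (rule ccontr)
  assume "\<not> ?thesis"
  then have "UNIV = (\<Union>s\<in>S. {\<beta>. \<beta> < s})" by (auto simp: not_le)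
  moreover have "countable (\<Union>s\<in>S. {\<beta>. \<beta> < s})" using assms by auto
  ultimately show False using assms(1) by simp
qed

theorem proposition1p1:
  assumes "uncountable (UNIV :: ('a::wellorder) set)"
    and "\<And>\<alpha>::'a. countable {\<beta>. \<beta> < \<alpha>}"
  shows "totally_lindelof (L_omega1 :: 'a option topology)"
  unfolding totally_lindelof_def L_top
proof (intro allI impI)
  fix \<F> :: "'a option set set"
  assume F: "filter_base UNIV \<F> \<and> stable_countable_inter \<F>"
  define T where "T \<alpha> = insert None (Some ` {\<gamma>. \<alpha> < \<gamma>})" for \<alpha> :: 'a
  have Tmono: "T (max a b) \<subseteq> T a \<inter> T b" for a b unfolding T_def by auto
  have Fne: "\<F> \<noteq> {}" and Fint: "\<And>A B. A \<in> \<F> \<Longrightarrow> B \<in> \<F> \<Longrightarrow> A \<inter> B \<in> \<F>"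
    and Fe: "{} \<notin> \<F>" using F unfolding filter_base_def by auto
  have Fst: "\<And>S. S \<subseteq> \<F> \<Longrightarrow> countable S \<Longrightarrow> \<exists>H\<in>\<F>. H \<subseteq> \<Inter>S"
    using F unfolding stable_countable_inter_def by auto
  have ex: "\<exists>\<G>. \<F> \<subseteq> \<G> \<and> filter_base UNIV \<G> \<and> stable_countable_inter \<G> \<and>
             total_filter_base L_omega1 \<G>"
  proof (cases "\<exists>x. \<forall>F\<in>\<F>. x \<in> F")
    case True
    then obtain x where x: "\<forall>F\<in>\<F>. x \<in> F" by blast
    define \<G> where "\<G> = {A. x \<in> A}"
    have fb: "filter_base UNIV \<G>" unfolding filter_base_def \<G>_def by auto
    show ?thesis
    proof (intro exI conjI)
      show "\<F> \<subseteq> \<G>" using x \<G>_def by auto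
      show "filter_base UNIV \<G>" by (rule fb)
      show "stable_countable_inter \<G>" unfolding stable_countable_inter_def \<G>_def
        by (intro allI impI bexI[of _ "{x}"]) auto
      show "total_filter_base L_omega1 \<G>"
        unfolding total_filter_base_def L_top
      proof (intro conjI allI impI fb)
        fix \<H> assume H: "filter_base UNIV \<H> \<and> \<G> \<subseteq> \<H>"
        have "x \<in> adherence L_omega1 \<H>"
          unfolding adherence_def
        proof
          fix A assume A: "A \<in> \<H>"
          have "{x} \<in> \<H>" using H \<G>_def by auto
          then have "A \<inter> {x} \<in> \<H>" using H A unfolding filter_base_def by auto
          then have "x \<in> A" using H unfolding filter_base_def by auto
          then show "x \<in> L_omega1 closure_of A"
            using closure_of_subset[of A L_omega1] L_top by auto
        qed
        then show "adherence L_omega1 \<H> \<noteq> {}" by auto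
      qed
    qed
  next
    case False
    have unb: "F \<inter> T \<alpha> \<noteq> {}" if "F \<in> \<F>" for F \<alpha>
    proof
      assume e: "F \<inter> T \<alpha> = {}"
      have "F \<subseteq> Some ` ({\<beta>. \<beta> < \<alpha>} \<union> {\<alpha>})"
      proof
        fix y assume "y \<in> F"
        with e have "y \<noteq> None" "\<And>g. y = Some g \<Longrightarrow> \<not> \<alpha> < g" unfolding T_def by auto
        then show "y \<in> Some ` ({\<beta>. \<beta> < \<alpha>} \<union> {\<alpha>})"
          by (cases y) (auto simp: not_less le_less)
      qed
      moreover have "countable (Some ` ({\<beta>. \<beta> < \<alpha>} \<union> {\<alpha>}))" using assms(2) by auto
      ultimately have cF: "countable F" by (rule countable_subset)
      have "\<forall>x. \<exists>G. G \<in> \<F> \<and> x \<notin> G" using False by blast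
      then obtain f where f: "\<And>x. f x \<in> \<F> \<and> x \<notin> f x" by (auto dest!: choice)
      have "insert F (f ` F) \<subseteq> \<F>" using f that by auto
      moreover have "countable (insert F (f ` F))" using cF by auto
      ultimately have "\<exists>H\<in>\<F>. H \<subseteq> \<Inter>(insert F (f ` F))" by (rule Fst)
      then obtain H where H: "H \<in> \<F>" "H \<subseteq> \<Inter>(insert F (f ` F))" by blast
      have "H \<noteq> {}" using H(1) Fe by blast
      then obtain y where y: "y \<in> H" by blast
      have "y \<in> f y" using H(2) y by blast
      then show False using f[of y] by blast
    qed
    define \<G> where "\<G> = {A. \<exists>F\<in>\<F>. \<exists>\<alpha>. F \<inter> T \<alpha> \<subseteq> A}"
    obtain F0 where F0: "F0 \<in> \<F>" using Fne by auto
    have TG: "T \<alpha> \<in> \<G>" for \<alpha> unfolding \<G>_def using F0 by auto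
    have fb: "filter_base UNIV \<G>" unfolding filter_base_def
    proof (intro conjI ballI)
      show "\<G> \<noteq> {}" using TG by auto
      show "\<G> \<subseteq> Pow UNIV" by auto
      show "{} \<notin> \<G>" unfolding \<G>_def using unb by auto
      fix A B assume "A \<in> \<G>" "B \<in> \<G>"
      then obtain F1 a1 F2 a2 where "F1 \<in> \<F>" "F1 \<inter> T a1 \<subseteq> A" "F2 \<in> \<F>" "F2 \<inter> T a2 \<subseteq> B"
        unfolding \<G>_def by auto
      then show "A \<inter> B \<in> \<G>" unfolding \<G>_def using Tmono[of a1 a2] Fint
        by (intro CollectI bexI[of _ "F1 \<inter> F2"] exI[of _ "max a1 a2"]) auto
    qed
    show ?thesis
    proof (intro exI conjI)
      show "\<F> \<subseteq> \<G>" unfolding \<G>_def by auto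
      show "filter_base UNIV \<G>" by (rule fb)
      show "stable_countable_inter \<G>" unfolding stable_countable_inter_def
      proof (intro allI impI)
        fix S assume S: "S \<subseteq> \<G> \<and> countable S"
        have ch1: "\<forall>A\<in>S. \<exists>F. F \<in> \<F> \<and> (\<exists>\<alpha>. F \<inter> T \<alpha> \<subseteq> A)"
        proof
          fix A assume "A \<in> S"
          then have "A \<in> \<G>" using S by blast
          then obtain F \<alpha> where "F \<in> \<F>" "F \<inter> T \<alpha> \<subseteq> A" unfolding \<G>_def by blast
          then show "\<exists>F. F \<in> \<F> \<and> (\<exists>\<alpha>. F \<inter> T \<alpha> \<subseteq> A)" by (intro exI[of _ F] conjI exI[of _ \<alpha>])
        qed
        obtain pf where pf: "\<forall>A\<in>S. pf A \<in> \<F> \<and> (\<exists>\<alpha>. pf A \<inter> T \<alpha> \<subseteq> A)"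
          using bchoice[OF ch1] by blast
        then have ch2: "\<forall>A\<in>S. \<exists>\<alpha>. pf A \<inter> T \<alpha> \<subseteq> A" by blast
        obtain pa where pa: "\<forall>A\<in>S. pf A \<inter> T (pa A) \<subseteq> A"
          using bchoice[OF ch2] by blast
        have "pf ` S \<subseteq> \<F>" "countable (pf ` S)" using pf S by auto
        then have "\<exists>H\<in>\<F>. H \<subseteq> \<Inter>(pf ` S)" by (rule Fst)
        then obtain H where H: "H \<in> \<F>" "H \<subseteq> \<Inter>(pf ` S)" by blast
        have "countable (pa ` S)" using S by auto
        then obtain b where b: "\<forall>s\<in>pa ` S. s \<le> b"
          using bound_countable[OF assms(1) assms(2)] by blast
        have "H \<inter> T b \<subseteq> \<Inter>S"
        proof
          fix z assume z: "z \<in> H \<inter> T b"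
          show "z \<in> \<Inter>S"
          proof
            fix A assume A: "A \<in> S"
            have "z \<in> pf A" using z H A by blast
            moreover have "pa A \<le> b" using b A by blast
            then have "z \<in> T (pa A)" using z unfolding T_def by auto
            ultimately show "z \<in> A" using pa A by blast
          qed
        qed
        moreover have "H \<inter> T b \<in> \<G>" unfolding \<G>_def using H by auto
        ultimately show "\<exists>H\<in>\<G>. H \<subseteq> \<Inter>S" by blast
      qed
      show "total_filter_base L_omega1 \<G>"
        unfolding total_filter_base_def L_top
      proof (intro conjI allI impI fb)
        fix \<H> assume H: "filter_base UNIV \<H> \<and> \<G> \<subseteq> \<H>"
        have "None \<in> adherence L_omega1 \<H>"
          unfolding adherence_def
        proof
          fix A assume A: "A \<in> \<H>"
          show "None \<in> L_omega1 closure_of A"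
            unfolding in_closure_of L_top
          proof (intro conjI allI impI UNIV_I)
            fix U :: "'a option set" assume U: "None \<in> U \<and> openin L_omega1 U"
            then obtain \<alpha> where "\<forall>\<gamma>. \<alpha> < \<gamma> \<longrightarrow> Some \<gamma> \<in> U" using L_open by blast
            then have TU: "T \<alpha> \<subseteq> U" using U unfolding T_def by auto
            have "A \<inter> T \<alpha> \<in> \<H>" using H A TG unfolding filter_base_def by auto
            then have "A \<inter> T \<alpha> \<noteq> {}" using H unfolding filter_base_def by auto
            then show "\<exists>y. y \<in> A \<and> y \<in> U" using TU by blast
          qed
        qed
        then show "adherence L_omega1 \<H> \<noteq> {}" by auto
      qed
    qed
  qed
  then show "\<exists>\<G>. \<F> \<subseteq> \<G> \<and> filter_base UNIV \<G> \<and> stable_countable_inter \<G> \<and>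
             total_filter_base L_omega1 \<G>" .
qed

end
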